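(* For every $\bm U\in\mathbb V_h$, $$\|\Delta_h\bm U\|_h\le|\bm U|_{2,h}\le\frac{\pi^2}{4}\|\Delta_h\bm U\|_h.$$
   Context: $\Omega=[x_L,x_R]\times[y_L,y_R]$, $l_1=x_R-x_L$, $l_2=y_R-y_L$, $N_1,N_2$ even, $h_r=l_r/N_r$, grid points $x_{j_1}=x_L+j_1h_1$, $y_{j_2}=y_L+j_2h_2$, $0\le j_r\le N_r-1$. $\mathbb V_h$: grid functions $U_{j_1,j_2}$ periodic ($U_{j_1+N_1,j_2}=U_{j_1,j_2}=U_{j_1,j_2+N_2}$), identified with vectors $\bm U=(U_{0,0},U_{1,0},\dots,U_{N_1-1,0},U_{0,1},\dots,U_{N_1-1,N_2-1})^T$. $\langle\bm U,\bm V\rangle_h=h_1h_2\sum_{j_1,j_2}U_{j_1,j_2}V_{j_1,j_2}$, $\|\bm U\|_h^2=\langle\bm U,\bm U\rangle_h$. $\Delta_hU_{j_1,j_2}=\frac{U_{j_1+1,j_2}-2U_{j_1,j_2}+U_{j_1-1,j_2}}{h_1^2}+\frac{U_{j_1,j_2+1}-2U_{j_1,j_2}+U_{j_1,j_2-1}}{h_2^2}$. With $\mu_r=2\pi/l_r$, $g^{(1)}_k(x)=\frac1{N_1}\sum_{l=-N_1/2}^{N_1/2}\frac1{a_l}e^{\mathrm il\mu_1(x-x_k)}$, $a_l=1$ for $|l|<N_1/2$, $a_{\pm N_1/2}=2$ (similarly $g^{(2)}_k(y)$), $\bm D_2^x=((g^{(1)}_k)''(x_j))_{j,k=0}^{N_1-1}$,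 $\bm D_2^y=((g^{(2)}_k)''(y_j))_{j,k=0}^{N_2-1}$, $\mathbb A=\bm I_{N_2}\otimes\bm D_2^x+\bm D_2^y\otimes\bm I_{N_1}$ ($\otimes$ Kronecker product), and $|\bm U|_{2,h}=\|\mathbb A\bm U\|_h$. *)

theory Defs
  imports "HOL-Analysis.Analysis"
begin

text \<open>Grid functions on the periodic N1 x N2 grid are represented as
  U :: nat => nat => real; only the values U j1 j2 with j1 < N1, j2 < N2
  are used, periodicity being implemented by taking indices mod N.\<close>

definition grid_ip :: "real \<Rightarrow> real \<Rightarrow> nat \<Rightarrow> nat \<Rightarrow> (nat \<Rightarrow> nat \<Rightarrow> real) \<Rightarrow> (nat \<Rightarrow> nat \<Rightarrow> real) \<Rightarrow> real" where
  "grid_ip h1 h2 N1 N2 U V = h1 * h2 * (\<Sum>j1<N1. \<Sum>j2<N2. U j1 j2 * V j1 j2)"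

definition grid_norm :: "real \<Rightarrow> real \<Rightarrow> nat \<Rightarrow> nat \<Rightarrow> (nat \<Rightarrow> nat \<Rightarrow> real) \<Rightarrow> real" where
  "grid_norm h1 h2 N1 N2 U = sqrt (grid_ip h1 h2 N1 N2 U U)"

definition disc_lap :: "real \<Rightarrow> real \<Rightarrow> nat \<Rightarrow> nat \<Rightarrow> (nat \<Rightarrow> nat \<Rightarrow> real) \<Rightarrow> nat \<Rightarrow> nat \<Rightarrow> real" where
  "disc_lap h1 h2 N1 N2 U j1 j2 =
     (U ((j1 + 1) mod N1) j2 - 2 * U j1 j2 + U ((j1 + N1 - 1) mod N1) j2) / h1\<^sup>2
   + (U j1 ((j2 + 1) mod N2) - 2 * U j1 j2 + U j1 ((j2 + N2 - 1) mod N2)) / h2\<^sup>2"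

definition a_w :: "nat \<Rightarrow> int \<Rightarrow> real" where
  "a_w N l = (if \<bar>l\<bar> < int N div 2 then 1 else 2)"

text \<open>Trigonometric cardinal function g_k on an interval of length len starting at x0
  with N points (real-valued; the defining complex sum is real by symmetry).\<close>
definition card_fun :: "real \<Rightarrow> real \<Rightarrow> nat \<Rightarrow> nat \<Rightarrow> real \<Rightarrow> real" where
  "card_fun len x0 N k x =
     Re ((1 / of_nat N) * (\<Sum>l \<in> {-(int N div 2) .. int N div 2}.
        complex_of_real (1 / a_w N l) *
        exp (\<i> * complex_of_real (of_int l * (2 * pi / len) * (x - (x0 + real k * (len / real N)))))))"

definition D2 :: "real \<Rightarrow> real \<Rightarrow> nat \<Rightarrow> nat \<Rightarrow> nat \<Rightarrow> real" where
  "D2 len x0 N j k = deriv (deriv (card_fun len x0 N k)) (x0 + real j * (len / real N))"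

text \<open>The action of the matrix A = I_{N2} (x) D2x + D2y (x) I_{N1} on the vector of
  a grid function (ordering j1 fastest), written out componentwise.\<close>
definition spec_lap :: "real \<Rightarrow> real \<Rightarrow> real \<Rightarrow> real \<Rightarrow> nat \<Rightarrow> nat \<Rightarrow> (nat \<Rightarrow> nat \<Rightarrow> real) \<Rightarrow> nat \<Rightarrow> nat \<Rightarrow> real" where
  "spec_lap xL xR yL yR N1 N2 U j1 j2 =
     (\<Sum>k<N1. D2 (xR - xL) xL N1 j1 k * U k j2) + (\<Sum>k<N2. D2 (yR - yL) yL N2 j2 k * U j1 k)"

end

theory Submission
  imports Defs "HOL-Library.Real_Mod"
begin

definition ee :: "nat \<Rightarrow> int \<Rightarrow> complex" where
  "ee N n = cis (2 * pi * of_int n / of_nat N)"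

lemma ee_add: "ee N (a + b) = ee N a * ee N b"
  unfolding ee_def by (simp add: cis_mult add_divide_distrib distrib_left)

lemma ee_dvd: assumes "N > 0" "int N dvd n" shows "ee N n = 1"
proof -
  obtain m where "n = int N * m" using assms by (auto elim: dvdE)
  then have "2 * pi * of_int n / of_nat N = 2 * pi * of_int m" using assms by simp
  then show ?thesis unfolding ee_def by simp
qed

lemma ee_cong: assumes "N > 0" "int N dvd (a - b)" shows "ee N a = ee N b"
proof -
  have "a = b + (a - b)" by simp
  then have "ee N a = ee N b * ee N (a - b)" by (metis ee_add)
  then show ?thesis using ee_dvd[OF assms] by simp
qed

lemma ee_pow: "ee N (n * int j) = (ee N n) ^ j"
proof -
  have "(ee N n) ^ j = cis (real j * (2 * pi * of_int n / of_nat N))"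
    unfolding ee_def by (rule Complex.DeMoivre)
  then show ?thesis unfolding ee_def by (simp add: algebra_simps)
qed

lemma ee_eq_1: assumes "N > 0" "ee N n = 1" shows "int N dvd n"
proof -
  from assms(2) obtain m where m: "2 * pi * of_int n / of_nat N = of_int m * (2 * pi)"
    unfolding ee_def cis_eq_1_iff by auto
  then have "real_of_int n = of_int m * of_nat N" using assms(1) by (simp add: field_simps)
  then have "n = m * int N" by (metis of_int_eq_iff of_int_mult of_int_of_nat_eq)
  then show ?thesis by simp
qed

lemma ee_sum: assumes "N > 0"
  shows "(\<Sum>j<N. ee N (n * int j)) = (if int N dvd n then of_nat N else 0)"
proof (cases "int N dvd n")
  case True
  then have "\<And>j. ee N (n * int j) = 1" using assms by (intro ee_dvd) auto
  then show ?thesis using True by simp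
next
  case False
  then have ne: "ee N n \<noteq> 1" using ee_eq_1 assms by blast
  have "(ee N n) ^ N = 1" using ee_pow[of N n N] ee_dvd[OF assms, of "n * int N"] by simp
  then show ?thesis using False ne by (simp add: ee_pow geometric_sum)
qed

lemma ee_uminus: "ee N (- n) = cnj (ee N n)"
  unfolding ee_def by (simp add: cis_cnj)

lemma ee_norm[simp]: "cmod (ee N n) = 1"
  unfolding ee_def by simp

lemma ee_cnj_mult: "ee N n * cnj (ee N n) = 1"
  by (metis complex_norm_square ee_norm of_real_1 power_one)

lemma ee_cos: "ee N n + ee N (- n) = of_real (2 * cos (2 * pi * of_int n / of_nat N))"
  unfolding ee_def by (simp add: cis_cnj complex_eq_iff cos_minus)

lemma dvd_diff_small: assumes "j < N" "j' < N" "int N dvd (int j - int j')" shows "j = j'"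
proof (rule ccontr)
  assume "j \<noteq> j'"
  then have "\<bar>int N\<bar> \<le> \<bar>int j - int j'\<bar>" using assms(3) by (intro dvd_imp_le_int) auto
  then show False using assms(1,2) by linarith
qed

lemma sum3_swap: "(\<Sum>l\<in>A. \<Sum>a\<in>B. \<Sum>b\<in>C. f l a b) = (\<Sum>a\<in>B. \<Sum>b\<in>C. \<Sum>l\<in>A. f l a b)"
proof -
  have "(\<Sum>l\<in>A. \<Sum>a\<in>B. \<Sum>b\<in>C. f l a b) = (\<Sum>a\<in>B. \<Sum>l\<in>A. \<Sum>b\<in>C. f l a b)"
    by (rule sum.swap)
  also have "\<dots> = (\<Sum>a\<in>B. \<Sum>b\<in>C. \<Sum>l\<in>A. f l a b)"
    by (rule sum.cong[OF refl], rule sum.swap)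
  finally show ?thesis .
qed

lemma parseval1:
  fixes v :: "nat \<Rightarrow> complex" assumes N: "N > 0"
  shows "(\<Sum>l<N. (cmod (\<Sum>j<N. v j * ee N (int l * int j)))\<^sup>2) = real N * (\<Sum>j<N. (cmod (v j))\<^sup>2)"
proof -
  have "complex_of_real (\<Sum>l<N. (cmod (\<Sum>j<N. v j * ee N (int l * int j)))\<^sup>2)
     = (\<Sum>l<N. (\<Sum>j<N. v j * ee N (int l * int j)) * cnj (\<Sum>j<N. v j * ee N (int l * int j)))"
    by (simp only: of_real_sum complex_norm_square)
  also have "\<dots> = (\<Sum>l<N. \<Sum>j'<N. \<Sum>j<N. v j * cnj (v j') * ee N ((int j - int j') * int l))"
    apply (simp add: sum_distrib_left sum_distrib_right cnj_sum)
    apply (intro sum.cong refl)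
    apply (simp add: ee_uminus[symmetric] algebra_simps)
    apply (subst ee_add[symmetric])+
    by (simp add: algebra_simps)
  also have "\<dots> = (\<Sum>j'<N. \<Sum>j<N. v j * cnj (v j') * (\<Sum>l<N. ee N ((int j - int j') * int l)))"
    by (subst sum3_swap) (simp add: sum_distrib_left)
  also have "\<dots> = (\<Sum>j'<N. \<Sum>j<N. if j' = j then v j * cnj (v j) * of_nat N else 0)"
  proof (intro sum.cong refl)
    fix j j' assume "j' \<in> {..<N}" "j \<in> {..<N}"
    then have "int N dvd (int j - int j') \<longleftrightarrow> j = j'"
      using dvd_diff_small by auto
    then show "v j * cnj (v j') * (\<Sum>l<N. ee N ((int j - int j') * int l)) = (if j' = j then v j * cnj (v j) * of_nat N else 0)"
      using ee_sum[OF N, of "int j - int j'"] by auto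
  qed
  also have "\<dots> = complex_of_real (real N * (\<Sum>j<N. (cmod (v j))\<^sup>2))"
    by (simp add: sum_distrib_left sum_distrib_right mult.commute complex_norm_square[symmetric])
  finally show ?thesis by (simp only: of_real_eq_iff)
qed

definition dft2 :: "nat \<Rightarrow> nat \<Rightarrow> (nat \<Rightarrow> nat \<Rightarrow> real) \<Rightarrow> nat \<Rightarrow> nat \<Rightarrow> complex" where
  "dft2 N1 N2 F l1 l2 = (\<Sum>j1<N1. \<Sum>j2<N2. of_real (F j1 j2) * ee N1 (int l1 * int j1) * ee N2 (int l2 * int j2))"

lemma parseval2:
  assumes N1: "N1 > 0" and N2: "N2 > 0"
  shows "(\<Sum>l1<N1. \<Sum>l2<N2. (cmod (dft2 N1 N2 F l1 l2))\<^sup>2) = real N1 * real N2 * (\<Sum>j1<N1. \<Sum>j2<N2. (F j1 j2)\<^sup>2)"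
proof -
  define V where "V l2 j1 = (\<Sum>j2<N2. of_real (F j1 j2) * ee N2 (int l2 * int j2))" for l2 j1
  have d: "dft2 N1 N2 F l1 l2 = (\<Sum>j1<N1. V l2 j1 * ee N1 (int l1 * int j1))" for l1 l2
    unfolding dft2_def V_def by (simp add: sum_distrib_left sum_distrib_right mult_ac)
  have "(\<Sum>l1<N1. \<Sum>l2<N2. (cmod (dft2 N1 N2 F l1 l2))\<^sup>2) = (\<Sum>l2<N2. \<Sum>l1<N1. (cmod (\<Sum>j1<N1. V l2 j1 * ee N1 (int l1 * int j1)))\<^sup>2)"
    unfolding d by (rule sum.swap)
  also have "\<dots> = (\<Sum>l2<N2. real N1 * (\<Sum>j1<N1. (cmod (V l2 j1))\<^sup>2))"
    by (simp add: parseval1[OF N1])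
  also have "\<dots> = real N1 * (\<Sum>j1<N1. \<Sum>l2<N2. (cmod (V l2 j1))\<^sup>2)"
    by (simp add: sum_distrib_left sum.swap[of _ "{..<N2}"])
  also have "\<dots> = real N1 * (\<Sum>j1<N1. real N2 * (\<Sum>j2<N2. (cmod (complex_of_real (F j1 j2)))\<^sup>2))"
    unfolding V_def by (simp add: parseval1[OF N2])
  also have "\<dots> = real N1 * real N2 * (\<Sum>j1<N1. \<Sum>j2<N2. (F j1 j2)\<^sup>2)"
    by (simp add: sum_distrib_left mult_ac)
  finally show ?thesis .
qed

lemma dft2_cong:
  assumes "\<And>j1 j2. j1 < N1 \<Longrightarrow> j2 < N2 \<Longrightarrow> F j1 j2 = G j1 j2"
  shows "dft2 N1 N2 F l1 l2 = dft2 N1 N2 G l1 l2"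
  unfolding dft2_def using assms by (intro sum.cong refl) auto

lemma dft2_op:
  assumes e1: "\<And>k. k < N1 \<Longrightarrow> (\<Sum>j<N1. of_real (T1 j k) * ee N1 (int l1 * int j)) = of_real s1 * ee N1 (int l1 * int k)"
    and e2: "\<And>k. k < N2 \<Longrightarrow> (\<Sum>j<N2. of_real (T2 j k) * ee N2 (int l2 * int j)) = of_real s2 * ee N2 (int l2 * int k)"
  shows "dft2 N1 N2 (\<lambda>j1 j2. (\<Sum>k<N1. T1 j1 k * U k j2) + (\<Sum>k<N2. T2 j2 k * U j1 k)) l1 l2
    = of_real (s1 + s2) * dft2 N1 N2 U l1 l2"
proof -
  let ?e1 = "\<lambda>j. ee N1 (int l1 * int j)" and ?e2 = "\<lambda>j. ee N2 (int l2 * int j)"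
  have p1: "(\<Sum>j1<N1. \<Sum>j2<N2. of_real (\<Sum>k<N1. T1 j1 k * U k j2) * ?e1 j1 * ?e2 j2) = of_real s1 * dft2 N1 N2 U l1 l2"
  proof -
    have "(\<Sum>j1<N1. \<Sum>j2<N2. of_real (\<Sum>k<N1. T1 j1 k * U k j2) * ?e1 j1 * ?e2 j2)
      = (\<Sum>j1<N1. \<Sum>j2<N2. \<Sum>k<N1. of_real (U k j2) * ?e2 j2 * (of_real (T1 j1 k) * ?e1 j1))"
      by (simp add: sum_distrib_left sum_distrib_right mult_ac)
    also have "\<dots> = (\<Sum>j2<N2. \<Sum>k<N1. \<Sum>j1<N1. of_real (U k j2) * ?e2 j2 * (of_real (T1 j1 k) * ?e1 j1))"
      by (rule sum3_swap)
    also have "\<dots> = (\<Sum>j2<N2. \<Sum>k<N1. of_real (U k j2) * ?e2 j2 * (of_real s1 * ?e1 k))"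
      by (intro sum.cong refl) (simp add: sum_distrib_left[symmetric] e1)
    also have "\<dots> = of_real s1 * (\<Sum>k<N1. \<Sum>j2<N2. of_real (U k j2) * ?e1 k * ?e2 j2)"
      by (subst sum.swap) (simp add: sum_distrib_left mult_ac)
    finally show ?thesis unfolding dft2_def .
  qed
  have p2: "(\<Sum>j1<N1. \<Sum>j2<N2. of_real (\<Sum>k<N2. T2 j2 k * U j1 k) * ?e1 j1 * ?e2 j2) = of_real s2 * dft2 N1 N2 U l1 l2"
  proof -
    have "(\<Sum>j1<N1. \<Sum>j2<N2. of_real (\<Sum>k<N2. T2 j2 k * U j1 k) * ?e1 j1 * ?e2 j2)
      = (\<Sum>j1<N1. \<Sum>j2<N2. \<Sum>k<N2. of_real (U j1 k) * ?e1 j1 * (of_real (T2 j2 k) * ?e2 j2))"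
      by (simp add: sum_distrib_left sum_distrib_right mult_ac)
    also have "\<dots> = (\<Sum>j1<N1. \<Sum>k<N2. \<Sum>j2<N2. of_real (U j1 k) * ?e1 j1 * (of_real (T2 j2 k) * ?e2 j2))"
      by (rule sum.cong[OF refl], rule sum.swap)
    also have "\<dots> = (\<Sum>j1<N1. \<Sum>k<N2. of_real (U j1 k) * ?e1 j1 * (of_real s2 * ?e2 k))"
      by (intro sum.cong refl) (simp add: sum_distrib_left[symmetric] e2)
    also have "\<dots> = of_real s2 * (\<Sum>j1<N1. \<Sum>k<N2. of_real (U j1 k) * ?e1 j1 * ?e2 k)"
      by (simp add: sum_distrib_left mult_ac)
    finally show ?thesis unfolding dft2_def .
  qed
  show ?thesis
    unfolding dft2_def of_real_add distrib_right sum.distrib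
    using p1 p2 unfolding dft2_def by (simp add: distrib_right)
qed

definition Tdisc :: "nat \<Rightarrow> real \<Rightarrow> nat \<Rightarrow> nat \<Rightarrow> real" where
  "Tdisc N h j k = ((if k = (j + 1) mod N then 1 else 0) - (if k = j then 2 else 0)
     + (if k = (j + N - 1) mod N then 1 else 0)) / h\<^sup>2"

lemma mod_succ: "(j::nat) < N \<Longrightarrow> (j + 1) mod N = (if j + 1 = N then 0 else j + 1)"
proof (cases "j + 1 < N")
  case False
  assume "j < N"
  with False have "j + 1 = N" by simp
  then show ?thesis by simp
qed simp

lemma mod_pred: assumes "(k::nat) < N" shows "(k + N - 1) mod N = (if k = 0 then N - 1 else k - 1)"
proof (cases "k = 0")
  case True
  have "N - 1 < N" using assms by simp
  then show ?thesis using True by simp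
next
  case False
  then have "k + N - 1 = (k - 1) + N" by simp
  then have "(k + N - 1) mod N = (k - 1) mod N" by simp
  also have "\<dots> = k - 1" using assms by simp
  finally show ?thesis using False by simp
qed

lemma Tdisc_row:
  fixes f :: "nat \<Rightarrow> real" assumes "j < N"
  shows "(\<Sum>k<N. Tdisc N h j k * f k) = (f ((j + 1) mod N) - 2 * f j + f ((j + N - 1) mod N)) / h\<^sup>2"
proof -
  have N: "N > 0" using assms by simp
  have "(\<Sum>k<N. Tdisc N h j k * f k) = ((\<Sum>k<N. if k = (j + 1) mod N then f k else 0)
     - (\<Sum>k<N. if k = j then 2 * f k else 0) + (\<Sum>k<N. if k = (j + N - 1) mod N then f k else 0)) / h\<^sup>2"
    unfolding Tdisc_def sum_subtractf[symmetric] sum.distrib[symmetric] sum_divide_distrib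
    by (intro sum.cong refl) (auto simp: field_simps)
  also have "\<dots> = (f ((j + 1) mod N) - 2 * f j + f ((j + N - 1) mod N)) / h\<^sup>2"
    using N assms by (simp add: sum.delta')
  finally show ?thesis .
qed

lemma sum_if_unique:
  assumes "(j0::nat) < N" "\<And>j. j < N \<Longrightarrow> P j \<longleftrightarrow> j = j0"
  shows "(\<Sum>j<N. if P j then g j else 0) = g j0"
proof -
  have "(\<Sum>j<N. if P j then g j else 0) = (\<Sum>j<N. if j = j0 then g j else 0)"
    by (rule sum.cong) (use assms(2) in auto)
  also have "\<dots> = g j0" using assms(1) by (simp add: sum.delta)
  finally show ?thesis .
qed

lemma Tdisc_col:
  fixes g :: "nat \<Rightarrow> complex" assumes "k < N"
  shows "(\<Sum>j<N. of_real (Tdisc N h j k) * g j) = (g ((k + N - 1) mod N) - 2 * g k + g ((k + 1) mod N)) / of_real (h\<^sup>2)"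
proof -
  have N: "N > 0" using assms by simp
  have e1: "(k = (j + 1) mod N) \<longleftrightarrow> (j = (k + N - 1) mod N)" if "j < N" for j
    by (simp only: mod_succ[OF that] mod_pred[OF assms]) (use that assms in auto)
  have e2: "(k = (j + N - 1) mod N) \<longleftrightarrow> (j = (k + 1) mod N)" if "j < N" for j
    by (simp only: mod_succ[OF assms] mod_pred[OF that]) (use that assms in auto)
  have "(\<Sum>j<N. of_real (Tdisc N h j k) * g j) = ((\<Sum>j<N. if k = (j + 1) mod N then g j else 0)
     - (\<Sum>j<N. if k = j then 2 * g j else 0) + (\<Sum>j<N. if k = (j + N - 1) mod N then g j else 0)) / of_real (h\<^sup>2)"
    unfolding sum_subtractf[symmetric] sum.distrib[symmetric] sum_divide_distrib
    by (intro sum.cong refl) (auto simp: Tdisc_def field_simps)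
  also have "\<dots> = (g ((k + N - 1) mod N) - 2 * g k + g ((k + 1) mod N)) / of_real (h\<^sup>2)"
  proof -
    have "(\<Sum>j<N. if k = (j + 1) mod N then g j else 0) = g ((k + N - 1) mod N)"
      by (rule sum_if_unique) (use e1 N in auto)
    moreover have "(\<Sum>j<N. if k = (j + N - 1) mod N then g j else 0) = g ((k + 1) mod N)"
      by (rule sum_if_unique) (use e2 N in auto)
    moreover have "(\<Sum>j<N. if k = j then 2 * g j else 0) = 2 * g k"
      by (rule sum_if_unique) (use assms in auto)
    ultimately show ?thesis by simp
  qed
  finally show ?thesis .
qed

lemma Tdisc_eig:
  assumes "k < N"
  shows "(\<Sum>j<N. of_real (Tdisc N h j k) * ee N (l * int j))
    = of_real ((2 * cos (2 * pi * of_int l / of_nat N) - 2) / h\<^sup>2) * ee N (l * int k)"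
proof -
  have N: "N > 0" using assms by simp
  have a: "ee N (l * int ((k + N - 1) mod N)) = ee N (l * int k) * ee N (- l)"
    unfolding ee_add[symmetric] using assms N
  proof (intro ee_cong[OF N])
    show "int N dvd l * int ((k + N - 1) mod N) - (l * int k + - l)"
    proof (cases "k = 0")
      case True
      then have "l * int ((k + N - 1) mod N) - (l * int k + - l) = int N * l"
        using mod_pred[OF assms] N by (simp add: of_nat_diff algebra_simps)
      then show ?thesis by simp
    next
      case False
      then have "l * int ((k + N - 1) mod N) - (l * int k + - l) = 0"
        using mod_pred[OF assms] N by (simp add: of_nat_diff algebra_simps)
      then show ?thesis by simp
    qed
  qed
  have b: "ee N (l * int ((k + 1) mod N)) = ee N (l * int k) * ee N l"
    unfolding ee_add[symmetric] using assms N
  proof (intro ee_cong[OF N])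
    show "int N dvd l * int ((k + 1) mod N) - (l * int k + l)"
    proof (cases "k + 1 = N")
      case True
      moreover have "int N = int k + 1" using True by simp
      moreover have "(k + 1) mod N = 0" using True by simp
      ultimately have "l * int ((k + 1) mod N) - (l * int k + l) = int N * (- l)"
        by (simp add: algebra_simps)
      then show ?thesis by (metis dvd_triv_left)
    next
      case False
      then have "l * int ((k + 1) mod N) - (l * int k + l) = 0"
        using mod_succ[OF assms] by (simp add: algebra_simps)
      then show ?thesis by simp
    qed
  qed
  have "(\<Sum>j<N. of_real (Tdisc N h j k) * ee N (l * int j))
      = ee N (l * int k) * ((ee N l + ee N (- l)) - 2) / of_real (h\<^sup>2)"
    unfolding Tdisc_col[OF assms] a b by (simp add: algebra_simps)
  also have "\<dots> = of_real ((2 * cos (2 * pi * of_int l / of_nat N) - 2) / h\<^sup>2) * ee N (l * int k)"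
    unfolding ee_cos by simp
  finally show ?thesis .
qed

lemma card_fun_eq:
  "card_fun len x0 N k = (\<lambda>x. (1 / real N) * (\<Sum>l\<in>{-(int N div 2)..int N div 2}.
      (1 / a_w N l) * cos (of_int l * (2 * pi / len) * (x - (x0 + real k * (len / real N))))))"
proof
  fix x
  show "card_fun len x0 N k x = (1 / real N) * (\<Sum>l\<in>{-(int N div 2)..int N div 2}.
      (1 / a_w N l) * cos (of_int l * (2 * pi / len) * (x - (x0 + real k * (len / real N)))))"
    unfolding card_fun_def cis_conv_exp[symmetric]
    by (simp add: Re_sum)
qed

lemma d_cos: "((\<lambda>x. cos (a * (x - b))) has_real_derivative (- sin (a * (x - b)) * a)) (at x)"
  by (rule derivative_eq_intros refl | simp)+

lemma d_negsin: "((\<lambda>x. - sin (a * (x - b)) * a) has_real_derivative (- cos (a * (x - b)) * a * a)) (at x)"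
  by (rule derivative_eq_intros refl | simp)+

lemma deriv_card_fun:
  "deriv (card_fun len x0 N k) = (\<lambda>x. (1 / real N) * (\<Sum>l\<in>{-(int N div 2)..int N div 2}.
      (1 / a_w N l) * (- sin (of_int l * (2 * pi / len) * (x - (x0 + real k * (len / real N)))) * (of_int l * (2 * pi / len)))))"
proof
  fix x
  show "deriv (card_fun len x0 N k) x = (1 / real N) * (\<Sum>l\<in>{-(int N div 2)..int N div 2}.
      (1 / a_w N l) * (- sin (of_int l * (2 * pi / len) * (x - (x0 + real k * (len / real N)))) * (of_int l * (2 * pi / len))))"
    unfolding card_fun_eq
    by (intro DERIV_imp_deriv DERIV_cmult DERIV_sum d_cos)
qed

lemma deriv2_card_fun:
  "deriv (deriv (card_fun len x0 N k)) = (\<lambda>x. (1 / real N) * (\<Sum>l\<in>{-(int N div 2)..int N div 2}.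
      (1 / a_w N l) * (- cos (of_int l * (2 * pi / len) * (x - (x0 + real k * (len / real N)))) * (of_int l * (2 * pi / len)) * (of_int l * (2 * pi / len)))))"
proof
  fix x
  show "deriv (deriv (card_fun len x0 N k)) x = (1 / real N) * (\<Sum>l\<in>{-(int N div 2)..int N div 2}.
      (1 / a_w N l) * (- cos (of_int l * (2 * pi / len) * (x - (x0 + real k * (len / real N)))) * (of_int l * (2 * pi / len)) * (of_int l * (2 * pi / len))))"
    unfolding deriv_card_fun
    by (intro DERIV_imp_deriv DERIV_cmult DERIV_sum d_negsin)
qed

definition wt :: "real \<Rightarrow> nat \<Rightarrow> int \<Rightarrow> real" where
  "wt len N l = (1 / a_w N l) * (of_int l * (2 * pi / len))\<^sup>2"

lemma D2_eq:
  assumes "len \<noteq> 0" "N > 0"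
  shows "D2 len x0 N j k = - (1 / real N) * (\<Sum>l\<in>{-(int N div 2)..int N div 2}.
      wt len N l * cos (2 * pi * of_int (l * (int j - int k)) / of_nat N))"
proof -
  have *: "of_int l * (2 * pi / len) * (x0 + real j * (len / real N) - (x0 + real k * (len / real N)))
      = 2 * pi * of_int (l * (int j - int k)) / of_nat N" for l
    using assms by (simp add: field_simps)
  show ?thesis
    unfolding D2_def deriv2_card_fun * wt_def
    by (simp add: sum_negf power2_eq_square algebra_simps)
qed

lemma sum_reflect: "(\<Sum>l\<in>{-M..M::int}. g (-l)) = (\<Sum>l\<in>{-M..M}. g l)"
  by (rule sum.reindex_bij_witness[of _ uminus uminus]) auto

lemma wt_neg: "wt len N (-l) = wt len N l"
  by (simp add: wt_def a_w_def)

lemma D2_complex: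
  assumes "len \<noteq> 0" "N > 0"
  shows "complex_of_real (D2 len x0 N j k) = - (1 / of_nat N) * (\<Sum>l\<in>{-(int N div 2)..int N div 2}.
      of_real (wt len N l) * ee N (l * (int j - int k)))"
proof -
  let ?I = "{-(int N div 2)..int N div 2}"
  let ?n = "int j - int k"
  have c: "complex_of_real (cos (2 * pi * of_int (l * ?n) / of_nat N)) = (ee N (l * ?n) + ee N ((- l) * ?n)) / 2" for l
    using ee_cos[of N "l * ?n"] by simp
  have "(\<Sum>l\<in>?I. of_real (wt len N l) * ee N ((- l) * ?n)) = (\<Sum>l\<in>?I. of_real (wt len N (- l)) * ee N ((- l) * ?n))"
    by (simp add: wt_neg)
  also have "\<dots> = (\<Sum>l\<in>?I. of_real (wt len N l) * ee N (l * ?n))"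
    by (rule sum_reflect[where g = "\<lambda>l. of_real (wt len N l) * ee N (l * ?n)"])
  finally have r: "(\<Sum>l\<in>?I. of_real (wt len N l) * ee N ((- l) * ?n)) = (\<Sum>l\<in>?I. of_real (wt len N l) * ee N (l * ?n))" .
  have "complex_of_real (D2 len x0 N j k) = - (1 / of_nat N) * (\<Sum>l\<in>?I. of_real (wt len N l) * of_real (cos (2 * pi * of_int (l * ?n) / of_nat N)))"
    unfolding D2_eq[OF assms] by simp
  also have "\<dots> = - (1 / of_nat N) * (((\<Sum>l\<in>?I. of_real (wt len N l) * ee N (l * ?n)) + (\<Sum>l\<in>?I. of_real (wt len N l) * ee N ((- l) * ?n))) / 2)"
    unfolding c by (simp add: sum.distrib[symmetric] sum_divide_distrib algebra_simps)
  also have "\<dots> = - (1 / of_nat N) * (\<Sum>l\<in>?I. of_real (wt len N l) * ee N (l * ?n))"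
    unfolding r by simp
  finally show ?thesis .
qed

lemma D2_eig:
  assumes "len \<noteq> 0" "N > 0" "k < N"
  shows "(\<Sum>j<N. of_real (D2 len x0 N j k) * ee N (l0 * int j))
    = of_real (- (\<Sum>l\<in>{-(int N div 2)..int N div 2}. if int N dvd l + l0 then wt len N l else 0)) * ee N (l0 * int k)"
proof -
  let ?I = "{-(int N div 2)..int N div 2}"
  have "(\<Sum>j<N. of_real (D2 len x0 N j k) * ee N (l0 * int j))
     = (\<Sum>j<N. - (1 / of_nat N) * (\<Sum>l\<in>?I. of_real (wt len N l) * ee N (- l * int k) * ee N ((l + l0) * int j)))"
    unfolding D2_complex[OF assms(1,2)]
    by (intro sum.cong refl) (simp add: sum_distrib_left sum_distrib_right mult.assoc ee_add[symmetric] algebra_simps)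
  also have "\<dots> = - (1 / of_nat N) * (\<Sum>l\<in>?I. of_real (wt len N l) * ee N (- l * int k) * (\<Sum>j<N. ee N ((l + l0) * int j)))"
    by (simp add: sum_distrib_left sum.swap[of _ "{..<N}"])
  also have "\<dots> = - (\<Sum>l\<in>?I. if int N dvd l + l0 then of_real (wt len N l) * ee N (l0 * int k) else 0)"
  proof -
    have "(\<Sum>l\<in>?I. of_real (wt len N l) * ee N (- l * int k) * (\<Sum>j<N. ee N ((l + l0) * int j)))
       = (\<Sum>l\<in>?I. of_nat N * (if int N dvd l + l0 then of_real (wt len N l) * ee N (l0 * int k) else 0))"
    proof (intro sum.cong refl)
      fix l
      show "of_real (wt len N l) * ee N (- l * int k) * (\<Sum>j<N. ee N ((l + l0) * int j))
         = of_nat N * (if int N dvd l + l0 then of_real (wt len N l) * ee N (l0 * int k) else 0)"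
      proof (cases "int N dvd l + l0")
        case True
        have "ee N (- l * int k) = ee N (l0 * int k)"
        proof (rule ee_cong[OF assms(2)])
          have "- l * int k - l0 * int k = - ((l + l0) * int k)" by (simp add: algebra_simps)
          then show "int N dvd - l * int k - l0 * int k" using True by simp
        qed
        then show ?thesis using True ee_sum[OF assms(2), of "l + l0"] by simp
      next
        case False
        then show ?thesis using ee_sum[OF assms(2), of "l + l0"] by simp
      qed
    qed
    then show ?thesis using assms(2) by (simp add: sum_distrib_left[symmetric])
  qed
  also have "\<dots> = of_real (- (\<Sum>l\<in>?I. if int N dvd l + l0 then wt len N l else 0)) * ee N (l0 * int k)"
    by (simp add: sum_distrib_right of_real_sum[symmetric] if_distrib[where f = complex_of_real] cong: if_cong) (intro sum.cong refl, simp)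
  finally show ?thesis .
qed

lemma x_cos_le_sin:
  fixes x :: real assumes "0 \<le> x" "x \<le> pi"
  shows "x * cos x \<le> sin x"
proof -
  have "(\<lambda>t. sin t - t * cos t) 0 \<le> (\<lambda>t. sin t - t * cos t) x"
  proof (rule DERIV_nonneg_imp_nondecreasing[OF assms(1)])
    fix t assume t: "0 \<le> t" "t \<le> x"
    show "\<exists>y. ((\<lambda>t. sin t - t * cos t) has_real_derivative y) (at t) \<and> 0 \<le> y"
      apply (rule exI[of _ "t * sin t"])
      apply (intro conjI)
       apply (rule derivative_eq_intros refl | simp)+
      using t assms by (intro mult_nonneg_nonneg sin_ge_zero) auto
  qed
  then show ?thesis by simp
qed

lemma jordan:
  fixes x :: real assumes "0 \<le> x" "x \<le> pi/2"
  shows "2 / pi * x \<le> sin x"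
proof (cases "x = 0")
  case True then show ?thesis by simp
next
  case False
  hence xp: "0 < x" using assms by simp
  have "(\<lambda>t. sin t / t) (pi/2) \<le> (\<lambda>t. sin t / t) x"
  proof (rule DERIV_nonpos_imp_decreasing_open[OF assms(2)])
    fix t assume t: "x < t" "t < pi/2"
    hence tp: "t > 0" using xp by simp
    show "\<exists>y. ((\<lambda>t. sin t / t) has_real_derivative y) (at t) \<and> y \<le> 0"
      apply (rule exI[of _ "(t * cos t - sin t) / t^2"])
      apply (intro conjI)
       apply (rule derivative_eq_intros refl)+
      using tp apply (simp_all add: field_simps power2_eq_square)
      using x_cos_le_sin[of t] t tp by (simp add: divide_nonpos_pos)
  next
    show "continuous_on {x..pi/2} (\<lambda>t. sin t / t)"
      using xp by (intro continuous_intros) auto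
  qed
  then have "2 / pi \<le> sin x / x" by simp
  then show ?thesis using xp by (simp add: field_simps)
qed

lemma sum_if_int:
  assumes "finite I" "l1 \<in> I" "\<And>l. l \<in> I \<Longrightarrow> P l \<longleftrightarrow> l = l1"
  shows "(\<Sum>l\<in>I. if P l then g l else 0) = g l1"
proof -
  have "(\<Sum>l\<in>I. if P l then g l else 0) = (\<Sum>l\<in>I. if l = l1 then g l else 0)"
    by (rule sum.cong) (use assms(3) in auto)
  also have "\<dots> = g l1" using assms(1,2) by (simp add: sum.delta)
  finally show ?thesis .
qed

lemma q01:
  fixes n q :: int assumes "0 < n" "- n < n * q" "n * q < 2 * n"
  shows "q = 0 \<or> q = 1"
proof -
  have "q > -1"
  proof (rule ccontr)
    assume "\<not> q > -1" then have "q \<le> -1" by simp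
    then have "n * q \<le> n * (-1)" using assms(1) by (intro mult_left_mono) auto
    then show False using assms(2) by simp
  qed
  moreover have "q < 2"
  proof (rule ccontr)
    assume "\<not> q < 2" then have "q \<ge> 2" by simp
    then have "n * q \<ge> n * 2" using assms(1) by (intro mult_left_mono) auto
    then show False using assms(3) by simp
  qed
  ultimately show ?thesis by auto
qed

lemma spec_val:
  assumes "even N" "N > 0" "l0 < N"
  shows "(\<Sum>l\<in>{-(int N div 2)..int N div 2}. if int N dvd l + int l0 then wt len N l else 0)
     = (2 * pi / len)\<^sup>2 * (real (min l0 (N - l0)))\<^sup>2"
proof -
  define M where "M = int N div 2"
  have NM: "int N = 2 * M" using assms(1) unfolding M_def by auto
  have Mp: "M > 0" using NM assms(2) by simp
  let ?I = "{-M..M}"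
  have key: "int N dvd l + int l0 \<longleftrightarrow> l = - int l0 \<or> l = int N - int l0" if "l \<in> ?I" for l
  proof
    assume "int N dvd l + int l0"
    then obtain q where q: "l + int l0 = int N * q" by (auto elim: dvdE)
    have "- int N < l + int l0" "l + int l0 < 2 * int N"
      using that NM assms(3) by auto
    then have "- int N < int N * q" "int N * q < 2 * int N"
      unfolding q by auto
    then have "q = 0 \<or> q = 1" using q01 assms(2) by simp
    then show "l = - int l0 \<or> l = int N - int l0" using q by auto
  next
    assume "l = - int l0 \<or> l = int N - int l0"
    then show "int N dvd l + int l0" by auto
  qed
  have w: "wt len N l = (1 / a_w N l) * (2 * pi / len)\<^sup>2 * (real_of_int l)\<^sup>2" for l
    unfolding wt_def by (simp add: power_mult_distrib power_divide)
  consider "int l0 < M" | "int l0 = M" | "int l0 > M" by linarith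
  then show ?thesis
  proof cases
    case 1
    have "(\<Sum>l\<in>?I. if int N dvd l + int l0 then wt len N l else 0) = wt len N (- int l0)"
      by (rule sum_if_int) (use key 1 NM in auto)
    moreover have "a_w N (- int l0) = 1" using 1 unfolding a_w_def M_def by simp
    moreover have "min l0 (N - l0) = l0" using 1 NM by auto
    ultimately show ?thesis unfolding M_def[symmetric] w by simp
  next
    case 2
    have "(\<Sum>l\<in>?I. if int N dvd l + int l0 then wt len N l else 0)
        = (\<Sum>l\<in>?I. (if l = - M then wt len N l else 0) + (if l = M then wt len N l else 0))"
      by (intro sum.cong refl) (use key 2 NM Mp in auto)
    also have "\<dots> = wt len N (- M) + wt len N M"
      using Mp by (simp add: sum.distrib sum.delta)
    also have "\<dots> = (2 * pi / len)\<^sup>2 * (real_of_int M)\<^sup>2"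
      unfolding w a_w_def M_def by simp
    also have "\<dots> = (2 * pi / len)\<^sup>2 * (real (min l0 (N - l0)))\<^sup>2"
    proof -
      have "min l0 (N - l0) = l0" using 2 NM by auto
      then show ?thesis using 2 by simp
    qed
    finally show ?thesis unfolding M_def .
  next
    case 3
    have "(\<Sum>l\<in>?I. if int N dvd l + int l0 then wt len N l else 0) = wt len N (int N - int l0)"
      by (rule sum_if_int) (use key 3 NM assms(3) in auto)
    moreover have "a_w N (int N - int l0) = 1" using 3 NM assms(3) unfolding a_w_def M_def by simp
    moreover have "min l0 (N - l0) = N - l0" using 3 NM by auto
    ultimately show ?thesis unfolding M_def[symmetric] w using assms(3) by (simp add: of_nat_diff)
  qed
qed

lemma eig_compare:
  assumes "N > 0" "l0 < N" "len > 0"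
  defines "h \<equiv> len / real N"
  shows "0 \<le> (2 - 2 * cos (2 * pi * real l0 / real N)) / h\<^sup>2
    \<and> (2 - 2 * cos (2 * pi * real l0 / real N)) / h\<^sup>2 \<le> (2 * pi / len)\<^sup>2 * (real (min l0 (N - l0)))\<^sup>2
    \<and> (2 * pi / len)\<^sup>2 * (real (min l0 (N - l0)))\<^sup>2 \<le> pi\<^sup>2 / 4 * ((2 - 2 * cos (2 * pi * real l0 / real N)) / h\<^sup>2)"
proof -
  define m where "m = min l0 (N - l0)"
  define th where "th = pi * real m / real N"
  have hp: "h > 0" using assms unfolding h_def by simp
  have m2: "2 * real m \<le> real N" using assms(2) unfolding m_def by auto
  have th0: "0 \<le> th" unfolding th_def by simp
  have th1: "th \<le> pi / 2" unfolding th_def using m2 assms(1) by (simp add: field_simps)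
  have c: "cos (2 * pi * real l0 / real N) = cos (2 * th)"
  proof (cases "m = l0")
    case True then show ?thesis unfolding th_def by (simp add: field_simps)
  next
    case False
    then have "m = N - l0" unfolding m_def by auto
    then have "2 * th = 2 * pi - 2 * pi * real l0 / real N"
      unfolding th_def using assms(1,2) by (simp add: of_nat_diff field_simps)
    then show ?thesis by (simp add: cos_diff)
  qed
  have d: "(2 - 2 * cos (2 * pi * real l0 / real N)) / h\<^sup>2 = 4 * (sin th)\<^sup>2 / h\<^sup>2"
    unfolding c cos_double_sin by simp
  have s: "(2 * pi / len)\<^sup>2 * (real m)\<^sup>2 = 4 * th\<^sup>2 / h\<^sup>2"
    unfolding th_def h_def using assms by (simp add: field_simps power2_eq_square)
  have sin0: "0 \<le> sin th" using th0 th1 by (intro sin_ge_zero) auto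
  have A: "(sin th)\<^sup>2 \<le> th\<^sup>2"
    using sin_x_le_x[OF th0] sin0 by (intro power_mono) auto
  have B: "th\<^sup>2 \<le> pi\<^sup>2 / 4 * (sin th)\<^sup>2"
  proof -
    have "2 / pi * th \<le> sin th" by (rule jordan[OF th0 th1])
    then have "th \<le> pi / 2 * sin th" by (simp add: field_simps)
    then have "th\<^sup>2 \<le> (pi / 2 * sin th)\<^sup>2" using th0 by (intro power_mono) auto
    then show ?thesis by (simp add: power_mult_distrib power_divide)
  qed
  show ?thesis unfolding d m_def[symmetric] s
    using A B hp by (auto simp: divide_right_mono field_simps)
qed

lemma disc_lap_op:
  assumes "j1 < N1" "j2 < N2"
  shows "disc_lap h1 h2 N1 N2 U j1 j2 = (\<Sum>k<N1. Tdisc N1 h1 j1 k * U k j2) + (\<Sum>k<N2. Tdisc N2 h2 j2 k * U j1 k)"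
  unfolding disc_lap_def
  using Tdisc_row[OF assms(1), of h1 "\<lambda>k. U k j2"] Tdisc_row[OF assms(2), of h2 "\<lambda>k. U j1 k"] by simp

lemma grid_norm_eq: "grid_norm h1 h2 N1 N2 F = sqrt (h1 * h2 * (\<Sum>j1<N1. \<Sum>j2<N2. (F j1 j2)\<^sup>2))"
  unfolding grid_norm_def grid_ip_def by (simp add: power2_eq_square)

lemma cmod_ofreal_mult: "(cmod (complex_of_real (- r) * z))\<^sup>2 = r\<^sup>2 * (cmod z)\<^sup>2"
  by (simp add: norm_mult power_mult_distrib)

theorem lemma2p3:
  fixes xL xR yL yR :: real and N1 N2 :: nat and U :: "nat \<Rightarrow> nat \<Rightarrow> real"
  assumes "xL < xR" and "yL < yR"
    and "even N1" and "N1 > 0" and "even N2" and "N2 > 0"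
  defines "h1 \<equiv> (xR - xL) / real N1" and "h2 \<equiv> (yR - yL) / real N2"
  shows "grid_norm h1 h2 N1 N2 (disc_lap h1 h2 N1 N2 U)
           \<le> grid_norm h1 h2 N1 N2 (spec_lap xL xR yL yR N1 N2 U)
       \<and> grid_norm h1 h2 N1 N2 (spec_lap xL xR yL yR N1 N2 U)
           \<le> pi\<^sup>2 / 4 * grid_norm h1 h2 N1 N2 (disc_lap h1 h2 N1 N2 U)"
proof -
  have N1: "N1 > 0" and N2: "N2 > 0" using assms by auto
  have L1: "xR - xL > 0" and L2: "yR - yL > 0" using assms by auto
  have hp: "h1 * h2 > 0" unfolding h1_def h2_def using N1 N2 L1 L2 by simp
  define dd1 where "dd1 l = (2 - 2 * cos (2 * pi * real l / real N1)) / h1\<^sup>2" for l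
  define dd2 where "dd2 l = (2 - 2 * cos (2 * pi * real l / real N2)) / h2\<^sup>2" for l
  define ss1 where "ss1 l = (2 * pi / (xR - xL))\<^sup>2 * (real (min l (N1 - l)))\<^sup>2" for l
  define ss2 where "ss2 l = (2 * pi / (yR - yL))\<^sup>2 * (real (min l (N2 - l)))\<^sup>2" for l
  define Uh where "Uh = dft2 N1 N2 U"
  define Fd where "Fd = disc_lap h1 h2 N1 N2 U"
  define Fs where "Fs = spec_lap xL xR yL yR N1 N2 U"
  have disc: "dft2 N1 N2 Fd l1 l2 = of_real (- (dd1 l1 + dd2 l2)) * Uh l1 l2" if "l1 < N1" "l2 < N2" for l1 l2
  proof -
    have "dft2 N1 N2 Fd l1 l2 = dft2 N1 N2 (\<lambda>j1 j2. (\<Sum>k<N1. Tdisc N1 h1 j1 k * U k j2) + (\<Sum>k<N2. Tdisc N2 h2 j2 k * U j1 k)) l1 l2"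
      unfolding Fd_def by (rule dft2_cong) (rule disc_lap_op)
    also have "\<dots> = of_real ((2 * cos (2 * pi * of_int (int l1) / of_nat N1) - 2) / h1\<^sup>2
                      + (2 * cos (2 * pi * of_int (int l2) / of_nat N2) - 2) / h2\<^sup>2) * Uh l1 l2"
      unfolding Uh_def by (rule dft2_op) (rule Tdisc_eig, assumption)+
    also have "\<dots> = of_real (- (dd1 l1 + dd2 l2)) * Uh l1 l2"
    proof -
      have "(2 * cos (2 * pi * of_int (int l1) / of_nat N1) - 2) / h1\<^sup>2
                      + (2 * cos (2 * pi * of_int (int l2) / of_nat N2) - 2) / h2\<^sup>2 = - (dd1 l1 + dd2 l2)"
        unfolding dd1_def dd2_def by (simp add: diff_divide_distrib)
      then show ?thesis by simp
    qed
    finally show ?thesis .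
  qed
  have spec: "dft2 N1 N2 Fs l1 l2 = of_real (- (ss1 l1 + ss2 l2)) * Uh l1 l2" if "l1 < N1" "l2 < N2" for l1 l2
  proof -
    have "dft2 N1 N2 Fs l1 l2 = dft2 N1 N2 (\<lambda>j1 j2. (\<Sum>k<N1. D2 (xR - xL) xL N1 j1 k * U k j2) + (\<Sum>k<N2. D2 (yR - yL) yL N2 j2 k * U j1 k)) l1 l2"
      unfolding Fs_def spec_lap_def by simp
    also have "\<dots> = of_real (- (\<Sum>l\<in>{-(int N1 div 2)..int N1 div 2}. if int N1 dvd l + int l1 then wt (xR - xL) N1 l else 0)
        + - (\<Sum>l\<in>{-(int N2 div 2)..int N2 div 2}. if int N2 dvd l + int l2 then wt (yR - yL) N2 l else 0)) * Uh l1 l2"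
      unfolding Uh_def using L1 L2 N1 N2 by (intro dft2_op D2_eig) auto
    also have "\<dots> = of_real (- (ss1 l1 + ss2 l2)) * Uh l1 l2"
      unfolding ss1_def ss2_def using spec_val[OF assms(3) N1 that(1)] spec_val[OF assms(5) N2 that(2)] by simp
    finally show ?thesis .
  qed
  have cmp: "0 \<le> dd1 l1 + dd2 l2 \<and> dd1 l1 + dd2 l2 \<le> ss1 l1 + ss2 l2 \<and> ss1 l1 + ss2 l2 \<le> pi\<^sup>2 / 4 * (dd1 l1 + dd2 l2)"
    if "l1 < N1" "l2 < N2" for l1 l2
    using eig_compare[OF N1 that(1) L1] eig_compare[OF N2 that(2) L2]
    unfolding dd1_def dd2_def ss1_def ss2_def h1_def h2_def by (simp add: distrib_left)
  have Pd: "real N1 * real N2 * (\<Sum>j1<N1. \<Sum>j2<N2. (Fd j1 j2)\<^sup>2) = (\<Sum>l1<N1. \<Sum>l2<N2. (dd1 l1 + dd2 l2)\<^sup>2 * (cmod (Uh l1 l2))\<^sup>2)"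
    unfolding parseval2[OF N1 N2, symmetric]
    by (intro sum.cong refl) (simp only: disc cmod_ofreal_mult lessThan_iff)
  have Ps: "real N1 * real N2 * (\<Sum>j1<N1. \<Sum>j2<N2. (Fs j1 j2)\<^sup>2) = (\<Sum>l1<N1. \<Sum>l2<N2. (ss1 l1 + ss2 l2)\<^sup>2 * (cmod (Uh l1 l2))\<^sup>2)"
    unfolding parseval2[OF N1 N2, symmetric]
    by (intro sum.cong refl) (simp only: spec cmod_ofreal_mult lessThan_iff)
  define Qd where "Qd = (\<Sum>j1<N1. \<Sum>j2<N2. (Fd j1 j2)\<^sup>2)"
  define Qs where "Qs = (\<Sum>j1<N1. \<Sum>j2<N2. (Fs j1 j2)\<^sup>2)"
  have NN: "real N1 * real N2 > 0" using N1 N2 by simp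
  have "real N1 * real N2 * Qd \<le> real N1 * real N2 * Qs"
    unfolding Qd_def Qs_def Pd Ps
  proof (intro sum_mono mult_right_mono)
    fix l1 l2 assume "l1 \<in> {..<N1}" "l2 \<in> {..<N2}"
    then show "(dd1 l1 + dd2 l2)\<^sup>2 \<le> (ss1 l1 + ss2 l2)\<^sup>2" using cmp[of l1 l2] by (intro power_mono) auto
  qed simp
  then have Q1: "Qd \<le> Qs" using NN by (metis mult_le_cancel_left_pos)
  have termi: "(ss1 l1 + ss2 l2)\<^sup>2 * (cmod (Uh l1 l2))\<^sup>2 \<le> (pi\<^sup>2 / 4)\<^sup>2 * ((dd1 l1 + dd2 l2)\<^sup>2 * (cmod (Uh l1 l2))\<^sup>2)"
    if "l1 < N1" "l2 < N2" for l1 l2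
  proof -
    have i: "(ss1 l1 + ss2 l2)\<^sup>2 \<le> (pi\<^sup>2 / 4 * (dd1 l1 + dd2 l2))\<^sup>2" using cmp[OF that] by (intro power_mono) auto
    have "(pi\<^sup>2 / 4 * (dd1 l1 + dd2 l2))\<^sup>2 = (pi\<^sup>2 / 4)\<^sup>2 * (dd1 l1 + dd2 l2)\<^sup>2"
      by (rule power_mult_distrib)
    then have "(ss1 l1 + ss2 l2)\<^sup>2 * (cmod (Uh l1 l2))\<^sup>2 \<le> ((pi\<^sup>2 / 4)\<^sup>2 * (dd1 l1 + dd2 l2)\<^sup>2) * (cmod (Uh l1 l2))\<^sup>2"
      using i by (intro mult_right_mono) auto
    then show ?thesis by (simp only: mult.assoc)
  qed
  have "real N1 * real N2 * Qs \<le> (\<Sum>l1<N1. \<Sum>l2<N2. (pi\<^sup>2 / 4)\<^sup>2 * ((dd1 l1 + dd2 l2)\<^sup>2 * (cmod (Uh l1 l2))\<^sup>2))"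
    unfolding Qs_def Ps by (intro sum_mono termi) auto
  also have "\<dots> = (pi\<^sup>2 / 4)\<^sup>2 * (real N1 * real N2 * Qd)"
    unfolding Qd_def Pd by (simp add: sum_distrib_left)
  also have "\<dots> = real N1 * real N2 * ((pi\<^sup>2 / 4)\<^sup>2 * Qd)" by (simp only: mult_ac)
  finally have "real N1 * real N2 * Qs \<le> real N1 * real N2 * ((pi\<^sup>2 / 4)\<^sup>2 * Qd)" .
  then have Q2: "Qs \<le> (pi\<^sup>2 / 4)\<^sup>2 * Qd" using NN by (metis mult_le_cancel_left_pos)
  have "sqrt (h1 * h2 * Qd) \<le> sqrt (h1 * h2 * Qs)" using Q1 hp by (simp add: mult_left_mono)
  moreover have "sqrt (h1 * h2 * Qs) \<le> pi\<^sup>2 / 4 * sqrt (h1 * h2 * Qd)"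
  proof -
    have "sqrt (h1 * h2 * Qs) \<le> sqrt ((pi\<^sup>2 / 4)\<^sup>2 * (h1 * h2 * Qd))"
    proof -
      have "h1 * h2 * Qs \<le> h1 * h2 * ((pi\<^sup>2 / 4)\<^sup>2 * Qd)" using Q2 hp by (simp add: mult_left_mono)
      then show ?thesis by (simp add: mult_ac)
    qed
    also have "\<dots> = pi\<^sup>2 / 4 * sqrt (h1 * h2 * Qd)"
      by (simp add: real_sqrt_mult)
    finally show ?thesis .
  qed
  ultimately show ?thesis
    unfolding grid_norm_eq Fd_def[symmetric] Fs_def[symmetric] Qd_def[symmetric] Qs_def[symmetric] by simp
qed

end
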